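(* Let $d\in\mathbb{N}$, let $P$ be a stationary and ergodic probability measure on $\Omega=[0,1]^{\mathcal{K}^d}$, and fix an integer $0\le q<d$. For each $t\in[0,1]$ let $\widehat\beta_q(t)$ be the non-random constant such that $|\Lambda_n|^{-1}\beta_q^n(t)\to\widehat\beta_q(t)$ almost surely (such a constant exists for each $t$). Assume that for every $Q\in\mathcal{K}^d$ the marginal distribution function $F^Q(t)=P(\omega_Q\le t)$ is continuous in $t\in[0,1]$. Then the functions $t\mapsto|\Lambda_n|^{-1}E[\beta_q^n(t)]$ converge to $\widehat\beta_q$ uniformly on $[0,1]$ as $n\to\infty$.
   Context: An elementary interval is $[l,l+1]$ or $[l]=[l,l]$ with $l\in\mathbb{Z}$; an elementary cube in $\mathbb{R}^d$ is a product of $d$ elementary intervals, of dimension equal to the number of nondegenerate factors; $\mathcal{K}^d$ is the set of all elementary cubes. A cubical set is a union of elementary cubes. For a cubical set $X$, $C_k(X)$ is the free $\mathbb{Z}$-module on the $k$-dimensional elementary cubes contained in $X$ with the standard cubical boundary operator; $H_k(X)$ is the resulting homology and, for bounded $X$, $\beta_k(X)$ is the rank of the free part of $H_k(X)$. $\Omega=[0,1]^{\mathcal{K}^d}$ with product topology and Borel $\sigma$-field, $\omega=(\omega_Q)_{Q\in\mathcal{K}^d}$; $\tau_x\omega=(\omega_{-x+Q})_Q$ for $x\in\mathbb{Z}^d$; stationarity: $P\circ\tau_x^{-1}=P$ for all $x$; ergodicity: translation-invariant events have probability $0$ or $1$; $E$ is expectation under $P$. $X(t)=\bigcup\{Q:\omega_Q\le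 t\}$, $\Lambda_n=[-n,n]^d$, $X^n(t)=X(t)\cap\Lambda_n$, $\beta_q^n(t)=\beta_q(X^n(t))$, $|\Lambda_n|=(2n)^d$. *)

theory Defs
  imports "HOL-Probability.Probability"
begin

text \<open>An elementary interval is encoded as (l, b):
  b = True means [l, l+1], b = False means [l] = [l,l].  An elementary cube in R^d
  is a map nat => int * bool, with coordinates i >= d fixed to (0, False).
  Points of R^d are maps nat => real vanishing at coordinates i >= d.\<close>

type_synonym cube = "nat \<Rightarrow> int \<times> bool"
type_synonym chain = "cube \<Rightarrow> int"

definition K :: "nat \<Rightarrow> cube set" where
  "K d = {Q. \<forall>i\<ge>d. Q i = (0, False)}"

definition cube_set :: "nat \<Rightarrow> cube \<Rightarrow> (nat \<Rightarrow> real) set" where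
  "cube_set d Q = {p. (\<forall>i<d. real_of_int (fst (Q i)) \<le> p i \<and>
                        p i \<le> real_of_int (fst (Q i)) + (if snd (Q i) then 1 else 0))
                   \<and> (\<forall>i\<ge>d. p i = 0)}"

definition cube_dim :: "nat \<Rightarrow> cube \<Rightarrow> nat" where
  "cube_dim d Q = card {i. i < d \<and> snd (Q i)}"

definition cubes :: "nat \<Rightarrow> (nat \<Rightarrow> real) set \<Rightarrow> nat \<Rightarrow> cube set" where
  "cubes d S k = {Q \<in> K d. cube_dim d Q = k \<and> cube_set d Q \<subseteq> S}"

definition chains :: "nat \<Rightarrow> (nat \<Rightarrow> real) set \<Rightarrow> nat \<Rightarrow> chain set" where
  "chains d S k = {c. finite {Q. c Q \<noteq> 0} \<and> (\<forall>Q. c Q \<noteq> 0 \<longrightarrow> Q \<in> cubes d S k)}"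

definition bd_cube :: "nat \<Rightarrow> cube \<Rightarrow> chain" where
  "bd_cube d Q = (\<lambda>R. \<Sum>i\<in>{i. i < d \<and> snd (Q i)}.
      (-1) ^ card {j. j < i \<and> snd (Q j)} *
      ((if R = Q(i := (fst (Q i) + 1, False)) then 1 else 0)
     - (if R = Q(i := (fst (Q i), False)) then 1 else 0)))"

definition bd :: "nat \<Rightarrow> chain \<Rightarrow> chain" where
  "bd d c = (\<lambda>R. \<Sum>Q\<in>{Q. c Q \<noteq> 0}. c Q * bd_cube d Q R)"

definition cycles :: "nat \<Rightarrow> (nat \<Rightarrow> real) set \<Rightarrow> nat \<Rightarrow> chain set" where
  "cycles d S k = {c \<in> chains d S k. bd d c = (\<lambda>_. 0)}"

definition boundaries :: "nat \<Rightarrow> (nat \<Rightarrow> real) set \<Rightarrow> nat \<Rightarrow> chain set" where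
  "boundaries d S k = bd d ` chains d S (Suc k)"

text \<open>beta_k(S): rank of H_k(S) = maximal number of Z-linearly independent homology
  classes (= rank of the free part of H_k).\<close>
definition betti :: "nat \<Rightarrow> (nat \<Rightarrow> real) set \<Rightarrow> nat \<Rightarrow> nat" where
  "betti d S k = Sup {m. \<exists>z :: nat \<Rightarrow> chain. (\<forall>j<m. z j \<in> cycles d S k) \<and>
      (\<forall>a :: nat \<Rightarrow> int. (\<lambda>R. \<Sum>j<m. a j * z j R) \<in> boundaries d S k \<longrightarrow> (\<forall>j<m. a j = 0))}"

definition Omega :: "nat \<Rightarrow> (cube \<Rightarrow> real) measure" where
  "Omega d = PiM (K d) (\<lambda>_. restrict_space borel {0..1::real})"

definition shift_cube :: "nat \<Rightarrow> (nat \<Rightarrow> int) \<Rightarrow> cube \<Rightarrow> cube" where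
  "shift_cube d x Q = (\<lambda>i. if i < d then (fst (Q i) + x i, snd (Q i)) else Q i)"

definition tau :: "nat \<Rightarrow> (nat \<Rightarrow> int) \<Rightarrow> (cube \<Rightarrow> real) \<Rightarrow> (cube \<Rightarrow> real)" where
  "tau d x \<omega> = restrict (\<lambda>Q. \<omega> (shift_cube d (\<lambda>i. - x i) Q)) (K d)"

definition stationary :: "nat \<Rightarrow> (cube \<Rightarrow> real) measure \<Rightarrow> bool" where
  "stationary d P \<longleftrightarrow> (\<forall>x. distr P P (tau d x) = P)"

definition ergodic :: "nat \<Rightarrow> (cube \<Rightarrow> real) measure \<Rightarrow> bool" where
  "ergodic d P \<longleftrightarrow> (\<forall>A \<in> sets P. (\<forall>x. tau d x -` A \<inter> space P = A) \<longrightarrow>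
       measure P A = 0 \<or> measure P A = 1)"

definition Xt :: "nat \<Rightarrow> (cube \<Rightarrow> real) \<Rightarrow> real \<Rightarrow> (nat \<Rightarrow> real) set" where
  "Xt d \<omega> t = \<Union>{cube_set d Q | Q. Q \<in> K d \<and> \<omega> Q \<le> t}"

definition Lambda :: "nat \<Rightarrow> nat \<Rightarrow> (nat \<Rightarrow> real) set" where
  "Lambda d n = {p. (\<forall>i<d. - real n \<le> p i \<and> p i \<le> real n) \<and> (\<forall>i\<ge>d. p i = 0)}"

definition Xn :: "nat \<Rightarrow> (cube \<Rightarrow> real) \<Rightarrow> real \<Rightarrow> nat \<Rightarrow> (nat \<Rightarrow> real) set" where
  "Xn d \<omega> t n = Xt d \<omega> t \<inter> Lambda d n"

definition betti_n :: "nat \<Rightarrow> nat \<Rightarrow> (cube \<Rightarrow> real) \<Rightarrow> real \<Rightarrow> nat \<Rightarrow> nat" where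
  "betti_n d q \<omega> t n = betti d (Xn d \<omega> t n) q"

end

theory Submission
  imports Defs
begin

definition ch :: "cube set \<Rightarrow> chain set" where
  "ch A = {c. finite {Q. c Q \<noteq> 0} \<and> (\<forall>Q. c Q \<noteq> 0 \<longrightarrow> Q \<in> A)}"
definition cyc :: "nat \<Rightarrow> cube set \<Rightarrow> chain set" where
  "cyc d A = {c \<in> ch A. bd d c = (\<lambda>_. 0)}"
definition Bd :: "nat \<Rightarrow> cube set \<Rightarrow> chain set" where
  "Bd d B = bd d ` ch B"
definition lc :: "nat \<Rightarrow> (nat \<Rightarrow> int) \<Rightarrow> (nat \<Rightarrow> chain) \<Rightarrow> chain" where
  "lc m a z = (\<lambda>R. \<Sum>j<m. a j * z j R)"
definition wit :: "nat \<Rightarrow> cube set \<Rightarrow> cube set \<Rightarrow> nat \<Rightarrow> (nat \<Rightarrow> chain) \<Rightarrow> bool" where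
  "wit d A B m z \<longleftrightarrow> (\<forall>j<m. z j \<in> cyc d A) \<and> (\<forall>a. lc m a z \<in> Bd d B \<longrightarrow> (\<forall>j<m. a j = 0))"
definition SS :: "nat \<Rightarrow> cube set \<Rightarrow> cube set \<Rightarrow> nat set" where
  "SS d A B = {m. \<exists>z. wit d A B m z}"

lemma betti_SS: "betti d S k = Sup (SS d (cubes d S k) (cubes d S (Suc k)))"
  unfolding betti_def SS_def wit_def lc_def cyc_def Bd_def ch_def cycles_def chains_def boundaries_def
  by simp

lemma bd_sum:
  assumes "finite F" "{Q. c Q \<noteq> 0} \<subseteq> F"
  shows "bd d c R = (\<Sum>Q\<in>F. c Q * bd_cube d Q R)"
  unfolding bd_def by (rule sum.mono_neutral_left[OF assms]) auto

lemma ch_fin: "c \<in> ch A \<Longrightarrow> finite {Q. c Q \<noteq> 0}" by (simp add: ch_def)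

lemma bd_lin:
  assumes "c1 \<in> ch A" "c2 \<in> ch B"
  shows "bd d (\<lambda>Q. k1 * c1 Q + k2 * c2 Q) = (\<lambda>R. k1 * bd d c1 R + k2 * bd d c2 R)"
proof
  fix R
  let ?F = "{Q. c1 Q \<noteq> 0} \<union> {Q. c2 Q \<noteq> 0}"
  have f: "finite ?F" using assms by (auto simp: ch_def)
  have "bd d (\<lambda>Q. k1 * c1 Q + k2 * c2 Q) R = (\<Sum>Q\<in>?F. (k1 * c1 Q + k2 * c2 Q) * bd_cube d Q R)"
    by (rule bd_sum[OF f]) auto
  also have "\<dots> = k1 * (\<Sum>Q\<in>?F. c1 Q * bd_cube d Q R) + k2 * (\<Sum>Q\<in>?F. c2 Q * bd_cube d Q R)"
    by (simp add: sum.distrib sum_distrib_left algebra_simps)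
  also have "\<dots> = k1 * bd d c1 R + k2 * bd d c2 R"
    using bd_sum[OF f, of c1] bd_sum[OF f, of c2] by auto
  finally show "bd d (\<lambda>Q. k1 * c1 Q + k2 * c2 Q) R = k1 * bd d c1 R + k2 * bd d c2 R" .
qed

lemma ch_lin:
  assumes "c1 \<in> ch A" "c2 \<in> ch A"
  shows "(\<lambda>Q. k1 * c1 Q + k2 * c2 Q) \<in> ch A"
proof -
  have "{Q. k1 * c1 Q + k2 * c2 Q \<noteq> 0} \<subseteq> {Q. c1 Q \<noteq> 0} \<union> {Q. c2 Q \<noteq> 0}" by auto
  then show ?thesis using assms unfolding ch_def by (auto intro: finite_subset)
qed

lemma ch_mono: "A \<subseteq> A' \<Longrightarrow> ch A \<subseteq> ch A'" by (auto simp: ch_def)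

lemma bd_zero: "bd d (\<lambda>_. 0) = (\<lambda>_. 0)" by (simp add: bd_def)

lemma zero_ch: "(\<lambda>_. 0) \<in> ch A" by (simp add: ch_def)

lemma zero_Bd: "(\<lambda>_. 0) \<in> Bd d B"
  unfolding Bd_def using bd_zero zero_ch by (metis image_eqI)

lemma Bd_lin:
  assumes "b1 \<in> Bd d B" "b2 \<in> Bd d B"
  shows "(\<lambda>R. k1 * b1 R + k2 * b2 R) \<in> Bd d B"
proof -
  obtain c1 c2 where c: "c1 \<in> ch B" "c2 \<in> ch B" "b1 = bd d c1" "b2 = bd d c2"
    using assms by (auto simp: Bd_def)
  have "(\<lambda>R. k1 * b1 R + k2 * b2 R) = bd d (\<lambda>Q. k1 * c1 Q + k2 * c2 Q)"
    using bd_lin[OF c(1,2)] c by simp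
  then show ?thesis unfolding Bd_def using ch_lin[OF c(1,2)] by blast
qed

lemma cyc_lin:
  assumes "c1 \<in> cyc d A" "c2 \<in> cyc d A"
  shows "(\<lambda>Q. k1 * c1 Q + k2 * c2 Q) \<in> cyc d A"
  using assms bd_lin[of c1 A c2 A d k1 k2] ch_lin[of c1 A c2 k1 k2] by (auto simp: cyc_def)

lemma Bd_mono: "B \<subseteq> B' \<Longrightarrow> Bd d B \<subseteq> Bd d B'"
  unfolding Bd_def using ch_mono by blast

lemma cyc_mono: "A \<subseteq> A' \<Longrightarrow> cyc d A \<subseteq> cyc d A'"
  unfolding cyc_def using ch_mono by blast

lemma Bd_insert:
  assumes "b \<in> Bd d (insert \<tau> B)"
  shows "\<exists>b'\<in>Bd d B. \<exists>\<kappa>. b = (\<lambda>R. 1 * b' R + \<kappa> * bd d (\<lambda>Q. if Q = \<tau> then 1 else 0) R)"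
proof -
  obtain c where c: "c \<in> ch (insert \<tau> B)" "b = bd d c" using assms by (auto simp: Bd_def)
  define c' where "c' = (\<lambda>Q. if Q = \<tau> then 0 else c Q)"
  have c'B: "c' \<in> ch B"
    using c(1) unfolding ch_def c'_def by (auto intro: finite_subset[of _ "{Q. c Q \<noteq> 0}"])
  have dch: "(\<lambda>Q. if Q = \<tau> then 1 else 0) \<in> ch (insert \<tau> B)" by (simp add: ch_def)
  have eq: "c = (\<lambda>Q. 1 * c' Q + c \<tau> * (if Q = \<tau> then 1 else 0))" by (auto simp: c'_def)
  have "b = (\<lambda>R. 1 * bd d c' R + c \<tau> * bd d (\<lambda>Q. if Q = \<tau> then 1 else 0) R)"
    using c(2) bd_lin[OF c'B dch, of d 1 "c \<tau>"] eq by metis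
  then show ?thesis using c'B unfolding Bd_def by blast
qed

lemma wit_down: "wit d A B (Suc m) z \<Longrightarrow> wit d A B m z"
  unfolding wit_def
proof (intro conjI allI impI, goal_cases)
  case (1 j) then show ?case by auto
next
  case (2 a j)
  have "lc (Suc m) (a(m := 0)) z = lc m a z" by (simp add: lc_def)
  then have "\<forall>j<Suc m. (a(m:=0)) j = 0" using 2 by metis
  then show ?case using 2 by (metis fun_upd_other less_Suc_eq nat_neq_iff)
qed

lemma SS_down: "Suc m \<in> SS d A B \<Longrightarrow> m \<in> SS d A B"
  unfolding SS_def using wit_down by blast

lemma SS_down': "m \<in> SS d A B \<Longrightarrow> k \<le> m \<Longrightarrow> k \<in> SS d A B"
  by (induction m arbitrary: k) (auto simp: le_Suc_eq dest: SS_down)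

lemma SS_zero: "0 \<in> SS d A B" by (auto simp: SS_def wit_def)

definition sw :: "nat \<Rightarrow> nat \<Rightarrow> nat \<Rightarrow> nat" where
  "sw p k j = (if j = p then k else if j = k then p else j)"

lemma sw_bij: "p < Suc k \<Longrightarrow> bij_betw (sw p k) {..<Suc k} {..<Suc k}"
  unfolding bij_betw_def inj_on_def sw_def by (auto simp: image_def)

lemma sw_inv: "sw p k (sw p k j) = j" by (auto simp: sw_def)

lemma lc_perm: "p < Suc k \<Longrightarrow> lc (Suc k) (a \<circ> sw p k) (z \<circ> sw p k) = lc (Suc k) a z"
  unfolding lc_def
proof
  fix R assume "p < Suc k"
  show "(\<Sum>j<Suc k. (a \<circ> sw p k) j * (z \<circ> sw p k) j R) = (\<Sum>j<Suc k. a j * z j R)"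
    using sum.reindex_bij_betw[OF sw_bij[OF \<open>p < Suc k\<close>], of "\<lambda>j. a j * z j R"] by simp
qed

lemma wit_perm:
  assumes "wit d A B (Suc k) z" "p < Suc k"
  shows "wit d A B (Suc k) (z \<circ> sw p k)"
  unfolding wit_def
proof (intro conjI allI impI)
  fix j assume "j < Suc k"
  then have "sw p k j < Suc k" using assms(2) by (auto simp: sw_def)
  then show "(z \<circ> sw p k) j \<in> cyc d A" using assms(1) by (auto simp: wit_def)
next
  fix a j assume a: "lc (Suc k) a (z \<circ> sw p k) \<in> Bd d B" and j: "j < Suc k"
  have "lc (Suc k) (a \<circ> sw p k) z = lc (Suc k) a (z \<circ> sw p k)"
    using lc_perm[OF assms(2), of a "z \<circ> sw p k"]
    by (simp add: comp_def sw_inv)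
  then have "\<forall>i<Suc k. (a \<circ> sw p k) i = 0" using a assms(1) unfolding wit_def by metis
  moreover have "sw p k j < Suc k" using assms(2) j by (auto simp: sw_def)
  ultimately show "a j = 0" by (metis comp_apply sw_inv)
qed

lemma lc_Suc: "lc (Suc k) a z = (\<lambda>R. lc k a z R + a k * z k R)"
  by (simp add: lc_def)

lemma L1:
  assumes "Suc k \<in> SS d (insert \<sigma> A) B"
  shows "k \<in> SS d A B"
proof -
  obtain z where z: "wit d (insert \<sigma> A) B (Suc k) z" using assms by (auto simp: SS_def)
  show ?thesis
  proof (cases "\<forall>j<Suc k. z j \<sigma> = 0")
    case True
    have "\<forall>j<Suc k. z j \<in> cyc d A"
    proof (intro allI impI)
      fix j assume j: "j < Suc k"
      then have "z j \<in> cyc d (insert \<sigma> A)" using z by (auto simp: wit_def)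
      then show "z j \<in> cyc d A" using True j by (auto simp: cyc_def ch_def)
    qed
    then have "wit d A B (Suc k) z" using z by (auto simp: wit_def)
    then show ?thesis unfolding SS_def using wit_down by blast
  next
    case False
    then obtain p where p: "p < Suc k" "z p \<sigma> \<noteq> 0" by auto
    define y where "y = z \<circ> sw p k"
    have y: "wit d (insert \<sigma> A) B (Suc k) y" unfolding y_def by (rule wit_perm[OF z p(1)])
    have yk: "y k \<sigma> \<noteq> 0" using p by (simp add: y_def sw_def)
    define w where "w = (\<lambda>j R. y k \<sigma> * y j R + (- y j \<sigma>) * y k R)"
    have "wit d A B k w"
      unfolding wit_def
    proof (intro conjI allI impI)
      fix j assume j: "j < k"
      have c1: "y j \<in> cyc d (insert \<sigma> A)" "y k \<in> cyc d (insert \<sigma> A)"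
        using y j by (auto simp: wit_def)
      have "w j \<in> cyc d (insert \<sigma> A)" unfolding w_def
        by (rule cyc_lin[OF c1])
      moreover have "w j \<sigma> = 0" by (simp add: w_def)
      ultimately show "w j \<in> cyc d A" by (auto simp: cyc_def ch_def)
    next
      fix b j assume b: "lc k b w \<in> Bd d B" and j: "j < k"
      define a where "a = (\<lambda>j. if j < k then b j * y k \<sigma> else - (\<Sum>i<k. b i * y i \<sigma>))"
      have "lc (Suc k) a y = lc k b w"
      proof
        fix R
        have "lc (Suc k) a y R = (\<Sum>i<k. b i * y k \<sigma> * y i R) - (\<Sum>i<k. b i * y i \<sigma>) * y k R"
          by (simp add: lc_def a_def)
        also have "\<dots> = lc k b w R"
          by (simp add: lc_def w_def sum_distrib_left sum_distrib_right sum_subtractf algebra_simps)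
        finally show "lc (Suc k) a y R = lc k b w R" .
      qed
      then have "\<forall>i<Suc k. a i = 0" using y b by (auto simp: wit_def)
      then have "a j = 0" using j by simp
      then have "b j * y k \<sigma> = 0" using j by (simp add: a_def)
      then show "b j = 0" using yk by simp
    qed
    then show ?thesis by (auto simp: SS_def)
  qed
qed

lemma L4:
  assumes "Suc k \<in> SS d A B"
  shows "k \<in> SS d A (insert \<tau> B)"
proof -
  obtain z where z: "wit d A B (Suc k) z" using assms by (auto simp: SS_def)
  show ?thesis
  proof (cases "wit d A (insert \<tau> B) (Suc k) z")
    case True
    then show ?thesis unfolding SS_def using wit_down by blast
  next
    case False
    have zc: "\<forall>j<Suc k. z j \<in> cyc d A" using z by (auto simp: wit_def)
    from False obtain a p where a: "lc (Suc k) a z \<in> Bd d (insert \<tau> B)" "p < Suc k" "a p \<noteq> 0"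
      using zc unfolding wit_def by blast
    define y where "y = z \<circ> sw p k"
    define a' where "a' = a \<circ> sw p k"
    have y: "wit d A B (Suc k) y" unfolding y_def by (rule wit_perm[OF z a(2)])
    have a'k: "a' k \<noteq> 0" using a by (simp add: a'_def sw_def)
    have la: "lc (Suc k) a' y \<in> Bd d (insert \<tau> B)"
      using a lc_perm[OF a(2), of a z] by (simp add: a'_def y_def)
    let ?dt = "bd d (\<lambda>Q. if Q = \<tau> then 1 else 0)"
    obtain b' \<kappa> where b': "b' \<in> Bd d B" "lc (Suc k) a' y = (\<lambda>R. 1 * b' R + \<kappa> * ?dt R)"
      using Bd_insert[OF la] by blast
    have "\<kappa> \<noteq> 0"
    proof
      assume "\<kappa> = 0"
      then have "lc (Suc k) a' y = b'" using b' by auto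
      then have "\<forall>j<Suc k. a' j = 0" using y b' unfolding wit_def by metis
      then show False using a'k by auto
    qed
    have "wit d A (insert \<tau> B) k y"
      unfolding wit_def
    proof (intro conjI allI impI)
      fix j assume "j < k" then show "y j \<in> cyc d A" using y by (auto simp: wit_def)
    next
      fix e j assume e: "lc k e y \<in> Bd d (insert \<tau> B)" and j: "j < k"
      obtain f' \<phi> where f': "f' \<in> Bd d B" "lc k e y = (\<lambda>R. 1 * f' R + \<phi> * ?dt R)"
        using Bd_insert[OF e] by blast
      define g where "g = (\<lambda>i. (if i < k then \<kappa> * e i else 0) + (- \<phi>) * a' i)"
      have "lc (Suc k) g y = (\<lambda>R. \<kappa> * lc k e y R + (- \<phi>) * lc (Suc k) a' y R)"
        by (auto simp: lc_def g_def sum.distrib sum_distrib_left sum_subtractf sum_negf algebra_simps)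
      also have "\<dots> = (\<lambda>R. \<kappa> * f' R + (- \<phi>) * b' R)"
        using f'(2) b'(2) by (auto simp: algebra_simps)
      finally have "lc (Suc k) g y = (\<lambda>R. \<kappa> * f' R + (- \<phi>) * b' R)" .
      then have "lc (Suc k) g y \<in> Bd d B" using Bd_lin[OF f'(1) b'(1), of \<kappa> "- \<phi>"] by metis
      then have g0: "\<forall>i<Suc k. g i = 0" using y unfolding wit_def by metis
      then have "\<phi> * a' k = 0" by (auto simp: g_def)
      then have "\<phi> = 0" using a'k by simp
      moreover have "g j = 0" using g0 j by simp
      ultimately have "\<kappa> * e j = 0" using j by (simp add: g_def)
      then show "e j = 0" using \<open>\<kappa> \<noteq> 0\<close> by simp
    qed
    then show ?thesis by (auto simp: SS_def)
  qed
qed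

lemma SS_empty: "m \<in> SS d {} B \<Longrightarrow> m = 0"
proof (rule ccontr)
  assume "m \<in> SS d {} B" "m \<noteq> 0"
  then obtain z where z: "wit d {} B m z" by (auto simp: SS_def)
  have "\<forall>j<m. z j = (\<lambda>_. 0)" using z by (auto simp: wit_def cyc_def ch_def)
  then have "lc m (\<lambda>_. 1) z = (\<lambda>_. 0)" by (auto simp: lc_def)
  then have "\<forall>j<m. (1::int) = 0" using z zero_Bd unfolding wit_def by metis
  then show False using \<open>m \<noteq> 0\<close> by auto
qed

lemma SS_bound: "finite A \<Longrightarrow> m \<in> SS d A B \<Longrightarrow> m \<le> card A"
proof (induction A arbitrary: m rule: finite_induct)
  case empty then show ?case using SS_empty by auto
next
  case (insert x F)
  show ?case
  proof (cases m)
    case 0 then show ?thesis by simp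
  next
    case (Suc k)
    then have "k \<in> SS d F B" using L1 insert.prems by blast
    then show ?thesis using insert Suc by auto
  qed
qed

lemma SS_mono_A: assumes "A \<subseteq> A'" shows "SS d A B \<subseteq> SS d A' B"
proof
  fix m assume "m \<in> SS d A B"
  then obtain z where z: "wit d A B m z" by (auto simp: SS_def)
  have "wit d A' B m z" using z cyc_mono[OF assms, of d] unfolding wit_def by (meson subsetD)
  then show "m \<in> SS d A' B" by (auto simp: SS_def)
qed

lemma SS_mono_B: assumes "B \<subseteq> B'" shows "SS d A B' \<subseteq> SS d A B"
proof
  fix m assume "m \<in> SS d A B'"
  then obtain z where z: "wit d A B' m z" by (auto simp: SS_def)
  have "wit d A B m z" using z Bd_mono[OF assms, of d] unfolding wit_def by (meson subsetD)
  then show "m \<in> SS d A B" by (auto simp: SS_def)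
qed

lemma SS_addA: "finite D \<Longrightarrow> m \<in> SS d (A \<union> D) B \<Longrightarrow> m - card D \<in> SS d A B"
proof (induction D arbitrary: m rule: finite_induct)
  case empty then show ?case by simp
next
  case (insert x F)
  show ?case
  proof (cases m)
    case 0 then show ?thesis using SS_zero by simp
  next
    case (Suc k)
    then have "k \<in> SS d (A \<union> F) B" using L1[of k d x "A \<union> F" B] insert.prems by simp
    then show ?thesis using insert Suc by auto
  qed
qed

lemma SS_addB: "finite D \<Longrightarrow> m \<in> SS d A B \<Longrightarrow> m - card D \<in> SS d A (B \<union> D)"
proof (induction D arbitrary: m rule: finite_induct)
  case empty then show ?case by simp
next
  case (insert x F)
  show ?case
  proof (cases "m - card F")
    case 0 then show ?thesis using SS_zero insert by simp
  next
    case (Suc k)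
    have "Suc k \<in> SS d A (B \<union> F)" using insert Suc by metis
    then have "k \<in> SS d A (insert x (B \<union> F))" by (rule L4)
    moreover have "m - card (insert x F) = k" using insert.hyps Suc by (simp; arith)
    ultimately show ?thesis by simp
  qed
qed

definition b2 :: "nat \<Rightarrow> cube set \<Rightarrow> cube set \<Rightarrow> nat" where
  "b2 d A B = Sup (SS d A B)"

lemma SS_bdd: "finite A \<Longrightarrow> bdd_above (SS d A B)"
  using SS_bound by (meson bdd_above.I)

lemma b2_in: assumes "finite A" shows "b2 d A B \<in> SS d A B"
proof -
  have fin: "finite (SS d A B)" using SS_bound \<open>finite A\<close> by (meson finite_nat_set_iff_bounded_le)
  show ?thesis unfolding b2_def using cSup_eq_Max[OF fin] Max_in[OF fin] SS_zero[of d A B] by (metis empty_iff)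
qed

lemma b2_ge: "finite A \<Longrightarrow> m \<in> SS d A B \<Longrightarrow> m \<le> b2 d A B"
  unfolding b2_def using SS_bdd by (simp add: cSup_upper)

lemma b2_le_card: "finite A \<Longrightarrow> b2 d A B \<le> card A"
  using b2_in SS_bound by blast

lemma b2_diff:
  assumes "finite A'" "A \<subseteq> A'" "B \<subseteq> B'" "finite (B' - B)"
  shows "\<bar>real (b2 d A' B') - real (b2 d A B)\<bar> \<le> real (card (A' - A)) + real (card (B' - B))"
proof -
  have fA: "finite A" using assms finite_subset by blast
  have fAd: "finite (A' - A)" using assms by auto
  have 1: "b2 d A' B' \<le> b2 d A' B"
    using b2_in[OF assms(1), of d B'] SS_mono_B[OF assms(3)] b2_ge[OF assms(1)] by blast
  have 2: "b2 d A' B - card (A' - A) \<le> b2 d A B"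
  proof -
    have "A' = A \<union> (A' - A)" using assms by auto
    then have "b2 d A' B - card (A' - A) \<in> SS d A B"
      using SS_addA[OF fAd, of "b2 d A' B" d A B] b2_in[OF assms(1), of d B] by metis
    then show ?thesis using b2_ge[OF fA] by blast
  qed
  have 3: "b2 d A B - card (B' - B) \<le> b2 d A B'"
  proof -
    have "B' = B \<union> (B' - B)" using assms by auto
    then have "b2 d A B - card (B' - B) \<in> SS d A B'"
      using SS_addB[OF assms(4), of "b2 d A B" d A B] b2_in[OF fA, of d B] by metis
    then show ?thesis using b2_ge[OF fA] by blast
  qed
  have 4: "b2 d A B' \<le> b2 d A' B'"
    using b2_in[OF fA, of d B'] SS_mono_A[OF assms(2)] b2_ge[OF assms(1)] by blast
  show ?thesis using 1 2 3 4 by linarith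
qed

definition lowpt :: "nat \<Rightarrow> cube \<Rightarrow> (nat \<Rightarrow> real)" where
  "lowpt d Q = (\<lambda>i. if i < d then real_of_int (fst (Q i)) else 0)"
definition ctr :: "nat \<Rightarrow> cube \<Rightarrow> (nat \<Rightarrow> real)" where
  "ctr d Q = (\<lambda>i. if i < d then real_of_int (fst (Q i)) + (if snd (Q i) then 1/2 else 0) else 0)"

lemma lowpt_in: "lowpt d Q \<in> cube_set d Q"
  by (auto simp: lowpt_def cube_set_def)

lemma ctr_in: "ctr d Q \<in> cube_set d Q"
  by (auto simp: ctr_def cube_set_def)

lemma ctr_sub:
  assumes "ctr d Q \<in> cube_set d R"
  shows "cube_set d Q \<subseteq> cube_set d R"
proof
  fix p assume p: "p \<in> cube_set d Q"
  have "\<forall>i<d. real_of_int (fst (R i)) \<le> p i \<and> p i \<le> real_of_int (fst (R i)) + (if snd (R i) then 1 else 0)"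
  proof (intro allI impI)
    fix i assume i: "i < d"
    define l where "l = fst (Q i)"
    define r where "r = fst (R i)"
    have c: "real_of_int r \<le> ctr d Q i" "ctr d Q i \<le> real_of_int r + (if snd (R i) then 1 else 0)"
      using assms i by (auto simp: cube_set_def r_def)
    have pi: "real_of_int l \<le> p i" "p i \<le> real_of_int l + (if snd (Q i) then 1 else 0)"
      using p i by (auto simp: cube_set_def l_def)
    show "real_of_int (fst (R i)) \<le> p i \<and> p i \<le> real_of_int (fst (R i)) + (if snd (R i) then 1 else 0)"
    proof (cases "snd (Q i)")
      case True
      then have ci: "ctr d Q i = real_of_int l + 1/2" using i by (simp add: ctr_def l_def)
      have "snd (R i)"
      proof (rule ccontr)
        assume "\<not> snd (R i)"
        then have "real_of_int r = real_of_int l + 1/2" using c ci by auto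
        then have "2 * r = 2 * l + 1" by linarith
        then show False by presburger
      qed
      then have "real_of_int l + 1/2 \<le> real_of_int r + 1" "real_of_int r \<le> real_of_int l + 1/2"
        using c ci by auto
      then have "r \<le> l" "l \<le> r" by linarith+
      then show ?thesis using pi True \<open>snd (R i)\<close> by (simp add: r_def[symmetric])
    next
      case False
      then have "ctr d Q i = real_of_int l" using i by (simp add: ctr_def l_def)
      then show ?thesis using pi False c by (simp add: r_def[symmetric])
    qed
  qed
  moreover have "\<forall>i\<ge>d. p i = 0" using p by (auto simp: cube_set_def)
  ultimately show "p \<in> cube_set d R" by (auto simp: cube_set_def)
qed

lemma sub_fst:
  assumes "cube_set d Q \<subseteq> cube_set d R" "i < d"
  shows "fst (R i) \<in> {fst (Q i) - 1, fst (Q i)}"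
proof -
  have "lowpt d Q \<in> cube_set d R" using assms lowpt_in by blast
  then have "real_of_int (fst (R i)) \<le> real_of_int (fst (Q i))"
    "real_of_int (fst (Q i)) \<le> real_of_int (fst (R i)) + 1"
    using assms(2) by (auto simp: cube_set_def lowpt_def split: if_splits)
  then have "fst (R i) \<le> fst (Q i)" "fst (Q i) \<le> fst (R i) + 1" by linarith+
  then show ?thesis by auto
qed

lemma Xt_sub:
  assumes "cube_set d Q \<subseteq> Xt d \<omega> t"
  shows "\<exists>R\<in>K d. \<omega> R \<le> t \<and> cube_set d Q \<subseteq> cube_set d R"
proof -
  have "ctr d Q \<in> Xt d \<omega> t" using assms ctr_in by blast
  then obtain R where "R \<in> K d" "\<omega> R \<le> t" "ctr d Q \<in> cube_set d R" by (auto simp: Xt_def)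
  then show ?thesis using ctr_sub by blast
qed

lemma sub_Xt: "R \<in> K d \<Longrightarrow> \<omega> R \<le> t \<Longrightarrow> cube_set d Q \<subseteq> cube_set d R \<Longrightarrow> cube_set d Q \<subseteq> Xt d \<omega> t"
  by (auto simp: Xt_def)

lemma Xt_mono: assumes "s \<le> t" shows "Xt d \<omega> s \<subseteq> Xt d \<omega> t"
proof
  fix x assume "x \<in> Xt d \<omega> s"
  then obtain Q where "Q \<in> K d" "\<omega> Q \<le> s" "x \<in> cube_set d Q" by (auto simp: Xt_def)
  then show "x \<in> Xt d \<omega> t" using assms unfolding Xt_def by (auto intro!: exI[of _ "cube_set d Q"])
qed

lemma card_cubes_le:
  assumes "\<And>i. i < d \<Longrightarrow> finite (T i)"
  shows "finite {Q \<in> K d. \<forall>i<d. Q i \<in> T i} \<and> card {Q \<in> K d. \<forall>i<d. Q i \<in> T i} \<le> (\<Prod>i<d. card (T i))"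
proof -
  let ?S = "{Q \<in> K d. \<forall>i<d. Q i \<in> T i}"
  have inj: "inj_on (\<lambda>Q. restrict Q {..<d}) ?S"
  proof (rule inj_onI)
    fix Q Q' assume a: "Q \<in> ?S" "Q' \<in> ?S" "restrict Q {..<d} = restrict Q' {..<d}"
    show "Q = Q'"
    proof
      fix i show "Q i = Q' i"
      proof (cases "i < d")
        case True
        then show ?thesis using fun_cong[OF a(3), of i] by simp
      next
        case False
        then show ?thesis using a(1,2) by (simp add: K_def)
      qed
    qed
  qed
  have img: "(\<lambda>Q. restrict Q {..<d}) ` ?S \<subseteq> PiE {..<d} T" by (rule image_subsetI, rule restrict_PiE_iff[THEN iffD2]) auto
  have fin: "finite (PiE {..<d} T)" using assms by (intro finite_PiE) auto
  have f: "finite ?S" using inj img fin by (meson finite_imageD finite_subset)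
  have "card ?S \<le> card (PiE {..<d} T)" using card_inj_on_le[OF inj img fin] .
  also have "\<dots> = (\<Prod>i<d. card (T i))" by (simp add: card_PiE)
  finally show ?thesis using f by simp
qed

definition Cn :: "nat \<Rightarrow> nat \<Rightarrow> cube set" where
  "Cn d n = {Q \<in> K d. \<forall>i<d. - int n \<le> fst (Q i) \<and> fst (Q i) \<le> int n}"

definition supc :: "nat \<Rightarrow> cube \<Rightarrow> cube set" where
  "supc d Q = {R \<in> K d. cube_set d Q \<subseteq> cube_set d R}"

lemma Cn_fin_card: "finite (Cn d n) \<and> card (Cn d n) \<le> (2 * (2 * n + 1)) ^ d"
proof -
  let ?T = "{- int n..int n} \<times> (UNIV :: bool set)"
  have eq: "Cn d n = {Q \<in> K d. \<forall>i<d. Q i \<in> ?T}"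
    unfolding Cn_def by (simp add: mem_Times_iff)
  have c: "card ?T = 2 * (2 * n + 1)"
    by (simp add: card_cartesian_product)
  have h: "finite {Q \<in> K d. \<forall>i<d. Q i \<in> ?T} \<and> card {Q \<in> K d. \<forall>i<d. Q i \<in> ?T} \<le> (\<Prod>i<d. card ?T)"
    by (rule card_cubes_le) auto
  have pe: "(\<Prod>i<d. card ?T) = (2 * (2 * n + 1)) ^ d" using c by simp
  show ?thesis using h unfolding eq pe by blast
qed

lemma supc_fin_card: "finite (supc d Q) \<and> card (supc d Q) \<le> 4 ^ d"
proof -
  let ?T = "\<lambda>i. {fst (Q i) - 1, fst (Q i)} \<times> (UNIV :: bool set)"
  have sub: "supc d Q \<subseteq> {R \<in> K d. \<forall>i<d. R i \<in> ?T i}"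
    using sub_fst by (auto simp: supc_def mem_Times_iff)
  have ct: "card (?T i) \<le> 4" for i
  proof -
    have "card (?T i) = card {fst (Q i) - 1, fst (Q i)} * 2" by (simp add: card_cartesian_product)
    also have "\<dots> \<le> 2 * 2" by simp
    finally show ?thesis by simp
  qed
  have h: "finite {R \<in> K d. \<forall>i<d. R i \<in> ?T i} \<and> card {R \<in> K d. \<forall>i<d. R i \<in> ?T i} \<le> (\<Prod>i<d. card (?T i))"
    by (rule card_cubes_le) auto
  have "(\<Prod>i<d. card (?T i)) \<le> (\<Prod>i<d. 4)" by (rule prod_mono) (use ct in auto)
  then have p4: "(\<Prod>i<d. card (?T i)) \<le> 4 ^ d" by simp
  have f: "finite (supc d Q)" using h sub finite_subset by blast
  have "card (supc d Q) \<le> card {R \<in> K d. \<forall>i<d. R i \<in> ?T i}" using h sub card_mono by blast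
  then show ?thesis using f h p4 by linarith
qed

lemma lam_cube:
  assumes "cube_set d Q \<subseteq> Lambda d n" "Q \<in> K d"
  shows "Q \<in> Cn d n"
proof -
  have "lowpt d Q \<in> Lambda d n" using assms lowpt_in by blast
  then have "\<forall>i<d. - real n \<le> real_of_int (fst (Q i)) \<and> real_of_int (fst (Q i)) \<le> real n"
    by (auto simp: Lambda_def lowpt_def)
  then show ?thesis using assms(2) unfolding Cn_def by (smt (verit) mem_Collect_eq of_int_le_iff of_int_minus of_int_of_nat_eq)
qed

lemma supc_Cn: assumes "Q \<in> Cn d n" shows "supc d Q \<subseteq> Cn d (Suc n)"
proof
  fix R assume R: "R \<in> supc d Q"
  then have h: "\<forall>i<d. fst (R i) \<in> {fst (Q i) - 1, fst (Q i)}" using sub_fst by (auto simp: supc_def)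
  have "\<forall>i<d. - int (Suc n) \<le> fst (R i) \<and> fst (R i) \<le> int (Suc n)"
  proof (intro allI impI)
    fix i assume i: "i < d"
    have "fst (R i) \<in> {fst (Q i) - 1, fst (Q i)}" using h i by blast
    moreover have "- int n \<le> fst (Q i) \<and> fst (Q i) \<le> int n" using assms i by (auto simp: Cn_def)
    ultimately show "- int (Suc n) \<le> fst (R i) \<and> fst (R i) \<le> int (Suc n)" by auto
  qed
  then show "R \<in> Cn d (Suc n)" using R by (auto simp: supc_def Cn_def)
qed

lemma meet_Cn:
  assumes "R \<in> K d" "p \<in> cube_set d R" "p \<in> Lambda d n"
  shows "R \<in> Cn d (Suc n)"
proof -
  have "\<forall>i<d. - int (Suc n) \<le> fst (R i) \<and> fst (R i) \<le> int (Suc n)"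
  proof (intro allI impI)
    fix i assume i: "i < d"
    have "real_of_int (fst (R i)) \<le> p i" "p i \<le> real_of_int (fst (R i)) + 1"
      "- real n \<le> p i" "p i \<le> real n"
      using assms i by (auto simp: cube_set_def Lambda_def split: if_splits)
    then have "real_of_int (fst (R i)) \<le> real n" "- real n - 1 \<le> real_of_int (fst (R i))" by linarith+
    then show "- int (Suc n) \<le> fst (R i) \<and> fst (R i) \<le> int (Suc n)" by linarith
  qed
  then show ?thesis using assms by (auto simp: Cn_def)
qed

lemma Cn_K: "Cn d n \<subseteq> K d" by (auto simp: Cn_def)

definition H :: "nat \<Rightarrow> nat \<Rightarrow> nat \<Rightarrow> cube set \<Rightarrow> nat" where
  "H d q n U = betti d ((\<Union>{cube_set d R | R. R \<in> U}) \<inter> Lambda d n) q"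

lemma betti_n_H: "betti_n d q \<omega> t n = H d q n {R \<in> Cn d (Suc n). \<omega> R \<le> t}"
proof -
  have "Xn d \<omega> t n = (\<Union>{cube_set d R | R. R \<in> {R \<in> Cn d (Suc n). \<omega> R \<le> t}}) \<inter> Lambda d n"
  proof (intro equalityI subsetI)
    fix x assume "x \<in> Xn d \<omega> t n"
    then obtain R where R: "R \<in> K d" "\<omega> R \<le> t" "x \<in> cube_set d R" "x \<in> Lambda d n"
      by (auto simp: Xn_def Xt_def)
    then have "R \<in> Cn d (Suc n)" using meet_Cn by blast
    then show "x \<in> (\<Union>{cube_set d R | R. R \<in> {R \<in> Cn d (Suc n). \<omega> R \<le> t}}) \<inter> Lambda d n"
      using R by blast
  next
    fix x assume "x \<in> (\<Union>{cube_set d R | R. R \<in> {R \<in> Cn d (Suc n). \<omega> R \<le> t}}) \<inter> Lambda d n"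
    then obtain R where R: "R \<in> Cn d (Suc n)" "\<omega> R \<le> t" "x \<in> cube_set d R" "x \<in> Lambda d n"
      by blast
    then have "R \<in> K d" using Cn_K by blast
    then show "x \<in> Xn d \<omega> t n" using R unfolding Xn_def Xt_def by blast
  qed
  then show ?thesis by (simp add: betti_n_def H_def)
qed

lemma cubes_Cn: "cubes d (Xn d \<omega> t n) k \<subseteq> Cn d n"
  using lam_cube by (auto simp: cubes_def Xn_def)

lemma diff_bound:
  assumes "s \<le> t" "q < d"
  shows "\<bar>real (betti_n d q \<omega> t n) - real (betti_n d q \<omega> s n)\<bar>
     \<le> real (card {Q \<in> Cn d n. \<exists>R\<in>supc d Q. s < \<omega> R \<and> \<omega> R \<le> t})"
proof -
  let ?N = "{Q \<in> Cn d n. \<exists>R\<in>supc d Q. s < \<omega> R \<and> \<omega> R \<le> t}"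
  let ?C = "\<lambda>u k. cubes d (Xn d \<omega> u n) k"
  have finC: "finite (Cn d n)" using Cn_fin_card by blast
  have finN: "finite ?N" using finC by auto
  have mono: "?C s k \<subseteq> ?C t k" for k
    using Xt_mono[OF assms(1)] by (auto simp: cubes_def Xn_def)
  have new: "?C t k - ?C s k \<subseteq> ?N" for k
  proof
    fix Q assume Q: "Q \<in> ?C t k - ?C s k"
    then have QC: "Q \<in> Cn d n" using cubes_Cn by blast
    from Q have "cube_set d Q \<subseteq> Xt d \<omega> t" by (auto simp: cubes_def Xn_def)
    then obtain R where R: "R \<in> K d" "\<omega> R \<le> t" "cube_set d Q \<subseteq> cube_set d R" using Xt_sub by blast
    have "\<not> \<omega> R \<le> s"
    proof
      assume "\<omega> R \<le> s"
      then have "cube_set d Q \<subseteq> Xt d \<omega> s" using sub_Xt R by blast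
      then show False using Q by (auto simp: cubes_def Xn_def)
    qed
    then show "Q \<in> ?N" using QC R by (auto simp: supc_def)
  qed
  have finCt: "finite (?C t k)" for k by (rule finite_subset[OF cubes_Cn finC])
  have disj: "(?C t q - ?C s q) \<inter> (?C t (Suc q) - ?C s (Suc q)) = {}"
    by (auto simp: cubes_def)
  have "card (?C t q - ?C s q) + card (?C t (Suc q) - ?C s (Suc q))
      = card ((?C t q - ?C s q) \<union> (?C t (Suc q) - ?C s (Suc q)))"
    using disj finCt by (intro card_Un_disjoint[symmetric]) auto
  also have "\<dots> \<le> card ?N" using new finN by (intro card_mono) auto
  finally have cN: "card (?C t q - ?C s q) + card (?C t (Suc q) - ?C s (Suc q)) \<le> card ?N" .
  have "\<bar>real (b2 d (?C t q) (?C t (Suc q))) - real (b2 d (?C s q) (?C s (Suc q)))\<bar>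
      \<le> real (card (?C t q - ?C s q)) + real (card (?C t (Suc q) - ?C s (Suc q)))"
    using finCt mono by (intro b2_diff) auto
  also have "\<dots> \<le> real (card ?N)" using cN by linarith
  finally show ?thesis by (simp add: betti_n_def betti_SS b2_def)
qed

lemma betti_n_le: "betti_n d q \<omega> t n \<le> (2 * (2 * n + 1)) ^ d"
proof -
  have fC: "finite (Cn d n)" using Cn_fin_card by blast
  have fin: "finite (cubes d (Xn d \<omega> t n) q)" by (rule finite_subset[OF cubes_Cn fC])
  have "betti_n d q \<omega> t n \<le> card (cubes d (Xn d \<omega> t n) q)"
    unfolding betti_n_def betti_SS b2_def[symmetric] by (rule b2_le_card[OF fin])
  also have "\<dots> \<le> card (Cn d n)" by (rule card_mono[OF fC cubes_Cn])
  also have "\<dots> \<le> (2 * (2 * n + 1)) ^ d" using Cn_fin_card by blast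
  finally show ?thesis .
qed

lemma comp_meas:
  assumes "sets P = sets (Omega d)" "R \<in> K d"
  shows "(\<lambda>\<omega>. \<omega> R) \<in> borel_measurable P"
proof -
  have "(\<lambda>\<omega>. \<omega> R) \<in> measurable (Omega d) (restrict_space borel {0..1::real})"
    unfolding Omega_def by (rule measurable_component_singleton[OF assms(2)])
  then have "(\<lambda>\<omega>. \<omega> R) \<in> borel_measurable (Omega d)"
    by (simp add: measurable_restrict_space2_iff)
  then show ?thesis by (subst measurable_cong_sets[OF assms(1) refl])
qed

lemma le_sets:
  assumes "sets P = sets (Omega d)" "R \<in> K d"
  shows "{\<omega> \<in> space P. \<omega> R \<le> t} \<in> sets P"
proof -
  have "(\<lambda>\<omega>. \<omega> R) -` {..t} \<inter> space P \<in> sets P"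
    by (rule measurable_sets[OF comp_meas[OF assms]]) auto
  moreover have "(\<lambda>\<omega>. \<omega> R) -` {..t} \<inter> space P = {\<omega> \<in> space P. \<omega> R \<le> t}" by auto
  ultimately show ?thesis by simp
qed

lemma betti_meas:
  assumes "sets P = sets (Omega d)"
  shows "(\<lambda>\<omega>. real (betti_n d q \<omega> t n)) \<in> borel_measurable P"
proof -
  define D where "D = Cn d (Suc n)"
  have fD: "finite D" using Cn_fin_card D_def by blast
  have DK: "D \<subseteq> K d" using Cn_K D_def by blast
  define T where "T = (\<lambda>\<omega>. {R \<in> D. \<omega> R \<le> t})"
  have Tm: "T \<in> measurable P (count_space (Pow D))"
    unfolding measurable_count_space_eq2[OF finite_Pow_iff[THEN iffD2, OF fD]]
  proof (intro conjI ballI)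
    show "T \<in> space P \<rightarrow> Pow D" by (auto simp: T_def)
  next
    fix U assume U: "U \<in> Pow D"
    define A where "A = (\<lambda>R. {\<omega> \<in> space P. \<omega> R \<le> t})"
    define B where "B = (\<lambda>R. if R \<in> U then A R else space P - A R)"
    have eq: "T -` {U} \<inter> space P = space P \<inter> (\<Inter>R\<in>D. B R)"
    proof (intro equalityI subsetI)
      fix \<omega> assume w: "\<omega> \<in> T -` {U} \<inter> space P"
      then have TU: "T \<omega> = U" "\<omega> \<in> space P" by auto
      have "\<omega> \<in> B R" if R: "R \<in> D" for R
      proof (cases "R \<in> U")
        case True
        then have "R \<in> T \<omega>" using TU by simp
        then show ?thesis using True TU by (simp add: B_def A_def T_def)
      next
        case False
        then have "R \<notin> T \<omega>" using TU by simp
        then show ?thesis using False TU R by (simp add: B_def A_def T_def)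
      qed
      then show "\<omega> \<in> space P \<inter> (\<Inter>R\<in>D. B R)" using TU by blast
    next
      fix \<omega> assume w: "\<omega> \<in> space P \<inter> (\<Inter>R\<in>D. B R)"
      have "T \<omega> = U"
      proof (intro equalityI subsetI)
        fix R assume "R \<in> T \<omega>"
        then have R: "R \<in> D" "\<omega> R \<le> t" by (auto simp: T_def)
        then have "\<omega> \<in> B R" using w by blast
        then show "R \<in> U" using R by (auto simp: B_def A_def split: if_splits)
      next
        fix R assume R: "R \<in> U"
        then have RD: "R \<in> D" using U by blast
        then have "\<omega> \<in> B R" using w by blast
        then show "R \<in> T \<omega>" using R RD by (simp add: B_def A_def T_def)
      qed
      then show "\<omega> \<in> T -` {U} \<inter> space P" using w by blast
    qed
    have Bs: "B R \<in> sets P" if "R \<in> D" for R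
    proof -
      have "A R \<in> sets P" unfolding A_def using le_sets[OF assms] DK that by blast
      then show ?thesis unfolding B_def by auto
    qed
    have "space P \<inter> (\<Inter>R\<in>D. B R) \<in> sets P"
    proof (cases "D = {}")
      case True then show ?thesis by simp
    next
      case False
      have "(\<Inter>R\<in>D. B R) \<in> sets P" by (rule sets.finite_INT[OF fD False Bs])
      then show ?thesis by auto
    qed
    then show "T -` {U} \<inter> space P \<in> sets P" using eq by simp
  qed
  have Hm: "(\<lambda>U. real (H d q n U)) \<in> measurable (count_space (Pow D)) borel" by simp
  have "(\<lambda>\<omega>. real (H d q n (T \<omega>))) \<in> borel_measurable P"
    using measurable_comp[OF Tm Hm] by (simp add: comp_def)
  then show ?thesis by (simp add: betti_n_H T_def D_def)
qed

lemma tau_meas: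
  assumes "sets P = sets (Omega d)"
  shows "tau d x \<in> measurable P P"
proof -
  have "tau d x \<in> measurable (Omega d) (Omega d)"
    unfolding tau_def Omega_def
  proof (rule measurable_restrict)
    fix Q assume Q: "Q \<in> K d"
    have "shift_cube d (\<lambda>i. - x i) Q \<in> K d" using Q by (auto simp: K_def shift_cube_def)
    then show "(\<lambda>\<omega>. \<omega> (shift_cube d (\<lambda>i. - x i) Q)) \<in> measurable (PiM (K d) (\<lambda>_. restrict_space borel {0..1::real})) (restrict_space borel {0..1})"
      by (rule measurable_component_singleton)
  qed
  then show ?thesis using measurable_cong_sets[OF assms assms] by simp
qed

definition R0 :: "cube \<Rightarrow> cube" where "R0 R = (\<lambda>i. (0, snd (R i)))"

lemma R0_K: "R \<in> K d \<Longrightarrow> R0 R \<in> K d" by (auto simp: K_def R0_def)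

lemma stat_eq:
  assumes "sets P = sets (Omega d)" "stationary d P" "R \<in> K d"
  shows "measure P {\<omega> \<in> space P. \<omega> R \<le> t} = measure P {\<omega> \<in> space P. \<omega> (R0 R) \<le> t}"
proof -
  define x where "x = (\<lambda>i. - fst (R i))"
  have tm: "tau d x \<in> measurable P P" by (rule tau_meas[OF assms(1)])
  have A: "{\<omega> \<in> space P. \<omega> (R0 R) \<le> t} \<in> sets P" by (rule le_sets[OF assms(1) R0_K[OF assms(3)]])
  have sh: "shift_cube d (\<lambda>i. - x i) (R0 R) = R"
  proof
    fix i show "shift_cube d (\<lambda>i. - x i) (R0 R) i = R i"
      using assms(3) by (cases "i < d") (auto simp: shift_cube_def x_def R0_def K_def)
  qed
  have pre: "tau d x -` {\<omega> \<in> space P. \<omega> (R0 R) \<le> t} \<inter> space P = {\<omega> \<in> space P. \<omega> R \<le> t}"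
  proof -
    have "\<And>\<omega>. \<omega> \<in> space P \<Longrightarrow> tau d x \<omega> \<in> space P" using measurable_space[OF tm] by blast
    moreover have "\<And>\<omega>. tau d x \<omega> (R0 R) = \<omega> R"
      using R0_K[OF assms(3)] sh by (simp add: tau_def)
    ultimately show ?thesis by auto
  qed
  have "measure P {\<omega> \<in> space P. \<omega> (R0 R) \<le> t} = measure (distr P P (tau d x)) {\<omega> \<in> space P. \<omega> (R0 R) \<le> t}"
    using assms(2) by (simp add: stationary_def)
  also have "\<dots> = measure P {\<omega> \<in> space P. \<omega> R \<le> t}"
    using measure_distr[OF tm A] pre by simp
  finally show ?thesis by simp
qed

lemma unif_fin:
  assumes "finite S" "\<forall>Q\<in>S. uniformly_continuous_on {0..1::real} (F Q)" "(\<epsilon>::real) > 0"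
  shows "\<exists>\<delta>>0. \<forall>Q\<in>S. \<forall>s\<in>{0..1}. \<forall>t\<in>{0..1}. \<bar>s - t\<bar> < \<delta> \<longrightarrow> \<bar>F Q s - F Q t\<bar> < \<epsilon>"
  using assms(1,2)
proof (induction S rule: finite_induct)
  case empty
  then show ?case by (intro exI[of _ 1]) auto
next
  case (insert x S)
  then obtain \<delta>1 where d1: "\<delta>1 > 0" "\<forall>Q\<in>S. \<forall>s\<in>{0..1}. \<forall>t\<in>{0..1}. \<bar>s - t\<bar> < \<delta>1 \<longrightarrow> \<bar>F Q s - F Q t\<bar> < \<epsilon>"
    by auto
  have "uniformly_continuous_on {0..1} (F x)" using insert.prems by auto
  then obtain \<delta>2 where d2: "\<delta>2 > 0" "\<forall>s\<in>{0..1}. \<forall>t\<in>{0..1}. dist t s < \<delta>2 \<longrightarrow> dist (F x t) (F x s) < \<epsilon>"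
    using assms(3) unfolding uniformly_continuous_on_def by metis
  show ?case
  proof (intro exI[of _ "min \<delta>1 \<delta>2"] conjI ballI impI)
    show "min \<delta>1 \<delta>2 > 0" using d1 d2 by simp
  next
    fix Q s t assume Q: "Q \<in> insert x S" and st: "s \<in> {0..1::real}" "t \<in> {0..1::real}" "\<bar>s - t\<bar> < min \<delta>1 \<delta>2"
    show "\<bar>F Q s - F Q t\<bar> < \<epsilon>"
    proof (cases "Q = x")
      case True
      have "dist s t < \<delta>2" using st by (simp add: dist_real_def)
      then have "dist (F x s) (F x t) < \<epsilon>" using d2 st by blast
      then show ?thesis using True by (simp add: dist_real_def)
    next
      case False
      then show ?thesis using Q d1 st by auto
    qed
  qed
qed

definition Ty :: "nat \<Rightarrow> cube set" where "Ty d = {R \<in> K d. \<forall>i<d. R i \<in> {0} \<times> (UNIV :: bool set)}"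

lemma Ty_fin: "finite (Ty d)"
  unfolding Ty_def using card_cubes_le[of d "\<lambda>_. {0} \<times> (UNIV :: bool set)"] by simp

lemma R0_Ty: "R \<in> K d \<Longrightarrow> R0 R \<in> Ty d"
  using R0_K[of R d] by (simp add: Ty_def R0_def)

lemma card_N_le:
  assumes "finite C" "\<And>Q. Q \<in> C \<Longrightarrow> finite (S Q)"
  shows "real (card {Q \<in> C. \<exists>R\<in>S Q. R \<in> G}) \<le> (\<Sum>Q\<in>C. \<Sum>R\<in>S Q. indicator G R)"
proof -
  have "real (card {Q \<in> C. \<exists>R\<in>S Q. R \<in> G}) = (\<Sum>Q\<in>{Q \<in> C. \<exists>R\<in>S Q. R \<in> G}. 1)"
    by simp
  also have "\<dots> = (\<Sum>Q\<in>C. if \<exists>R\<in>S Q. R \<in> G then 1 else 0)"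
    using sum.inter_filter[OF assms(1), of "\<lambda>_. 1::real"] by simp
  also have "\<dots> \<le> (\<Sum>Q\<in>C. \<Sum>R\<in>S Q. indicator G R)"
  proof (rule sum_mono)
    fix Q assume Q: "Q \<in> C"
    show "(if \<exists>R\<in>S Q. R \<in> G then 1 else 0) \<le> (\<Sum>R\<in>S Q. indicator G R :: real)"
    proof (cases "\<exists>R\<in>S Q. R \<in> G")
      case True
      then obtain R where R: "R \<in> S Q" "R \<in> G" by blast
      have "indicator G R \<le> (\<Sum>R\<in>S Q. indicator G R :: real)"
        by (rule member_le_sum[OF R(1)]) (auto simp: assms(2)[OF Q])
      then show ?thesis using True R by simp
    next
      case False
      then show ?thesis by (simp add: sum_nonneg)
    qed
  qed
  finally show ?thesis .
qed

lemma int_bound: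
  assumes P: "prob_space P" "sets P = sets (Omega d)" and st: "s \<le> t" "q < d"
  shows "\<bar>(\<integral>\<omega>. real (betti_n d q \<omega> t n) \<partial>P) - (\<integral>\<omega>. real (betti_n d q \<omega> s n) \<partial>P)\<bar>
     \<le> (\<Sum>Q\<in>Cn d n. \<Sum>R\<in>supc d Q. measure P {\<omega> \<in> space P. s < \<omega> R \<and> \<omega> R \<le> t})"
proof -
  interpret prob_space P by (rule P(1))
  define G where "G = (\<lambda>R. {\<omega> \<in> space P. s < \<omega> R \<and> \<omega> R \<le> t})"
  have fC: "finite (Cn d n)" using Cn_fin_card by blast
  have fS: "finite (supc d Q)" for Q using supc_fin_card by blast
  have supK: "supc d Q \<subseteq> K d" for Q by (auto simp: supc_def)
  have Gs: "G R \<in> sets P" if "R \<in> K d" for R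
  proof -
    have "G R = {\<omega> \<in> space P. \<omega> R \<le> t} - {\<omega> \<in> space P. \<omega> R \<le> s}" by (auto simp: G_def)
    then show ?thesis using le_sets[OF P(2) that] by auto
  qed
  have intb: "integrable P (\<lambda>\<omega>. real (betti_n d q \<omega> u n))" for u
  proof (rule integrable_const_bound[where B = "real ((2 * (2 * n + 1)) ^ d)"])
    have "norm (real (betti_n d q \<omega> u n)) \<le> real ((2 * (2 * n + 1)) ^ d)" for \<omega>
      using betti_n_le[of d q \<omega> u n] by (simp only: real_norm_def abs_of_nat of_nat_le_iff)
    then show "AE \<omega> in P. norm (real (betti_n d q \<omega> u n)) \<le> real ((2 * (2 * n + 1)) ^ d)" by simp
  qed (rule betti_meas[OF P(2)])
  define g where "g = (\<lambda>\<omega>. \<Sum>Q\<in>Cn d n. \<Sum>R\<in>supc d Q. indicator (G R) \<omega> :: real)"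
  have intI: "integrable P (\<lambda>\<omega>. indicator (G R) \<omega> :: real)" if "R \<in> K d" for R
  proof (rule integrable_real_indicator)
    show "G R \<in> sets P" by (rule Gs[OF that])
    show "emeasure P (G R) < \<infinity>" by (simp add: less_top[symmetric])
  qed
  have intI2: "integrable P (\<lambda>\<omega>. \<Sum>R\<in>supc d Q. indicator (G R) \<omega> :: real)" for Q
    by (rule Bochner_Integration.integrable_sum) (use intI supK in blast)
  have intg: "integrable P g"
    unfolding g_def by (rule Bochner_Integration.integrable_sum) (rule intI2)
  have pw: "\<bar>real (betti_n d q \<omega> t n) - real (betti_n d q \<omega> s n)\<bar> \<le> g \<omega>" if "\<omega> \<in> space P" for \<omega>
  proof -
    have "\<bar>real (betti_n d q \<omega> t n) - real (betti_n d q \<omega> s n)\<bar>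
        \<le> real (card {Q \<in> Cn d n. \<exists>R\<in>supc d Q. s < \<omega> R \<and> \<omega> R \<le> t})"
      by (rule diff_bound[OF st])
    also have "{Q \<in> Cn d n. \<exists>R\<in>supc d Q. s < \<omega> R \<and> \<omega> R \<le> t} = {Q \<in> Cn d n. \<exists>R\<in>supc d Q. R \<in> {R. \<omega> \<in> G R}}"
      using that by (auto simp: G_def)
    also have "real (card \<dots>) \<le> (\<Sum>Q\<in>Cn d n. \<Sum>R\<in>supc d Q. indicator {R. \<omega> \<in> G R} R)"
      by (rule card_N_le[OF fC fS])
    also have "\<dots> = g \<omega>" by (simp add: g_def indicator_def)
    finally show ?thesis .
  qed
  have "\<bar>(\<integral>\<omega>. real (betti_n d q \<omega> t n) \<partial>P) - (\<integral>\<omega>. real (betti_n d q \<omega> s n) \<partial>P)\<bar>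
      = \<bar>\<integral>\<omega>. real (betti_n d q \<omega> t n) - real (betti_n d q \<omega> s n) \<partial>P\<bar>"
    using intb by simp
  also have "\<dots> \<le> (\<integral>\<omega>. g \<omega> \<partial>P)"
  proof -
    have "\<bar>\<integral>\<omega>. real (betti_n d q \<omega> t n) - real (betti_n d q \<omega> s n) \<partial>P\<bar>
       \<le> (\<integral>\<omega>. \<bar>real (betti_n d q \<omega> t n) - real (betti_n d q \<omega> s n)\<bar> \<partial>P)"
      by (rule integral_abs_bound)
    also have "\<dots> \<le> (\<integral>\<omega>. g \<omega> \<partial>P)"
      by (rule integral_mono) (use intb intg pw in auto)
    finally show ?thesis .
  qed
  also have "(\<integral>\<omega>. g \<omega> \<partial>P) = (\<Sum>Q\<in>Cn d n. \<Sum>R\<in>supc d Q. measure P (G R))"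
  proof -
    have "(\<integral>\<omega>. g \<omega> \<partial>P) = (\<Sum>Q\<in>Cn d n. \<integral>\<omega>. (\<Sum>R\<in>supc d Q. indicator (G R) \<omega> :: real) \<partial>P)"
      unfolding g_def by (rule Bochner_Integration.integral_sum) (rule intI2)
    also have "\<dots> = (\<Sum>Q\<in>Cn d n. \<Sum>R\<in>supc d Q. \<integral>\<omega>. indicator (G R) \<omega> \<partial>P)"
      by (intro sum.cong refl Bochner_Integration.integral_sum) (use intI supK in blast)
    also have "\<dots> = (\<Sum>Q\<in>Cn d n. \<Sum>R\<in>supc d Q. measure P (G R))"
      by (intro sum.cong refl) (simp add: G_def Int_absorb2 subset_iff)
    finally show ?thesis .
  qed
  finally show ?thesis by (simp add: G_def)
qed

lemma equi:
  assumes P: "prob_space P" "sets P = sets (Omega d)" "stationary d P" and q: "q < d"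
    and cont: "\<forall>Q\<in>K d. continuous_on {0..1} (\<lambda>t. measure P {\<omega> \<in> space P. \<omega> Q \<le> t})"
    and e: "\<epsilon> > 0"
  shows "\<exists>\<delta>>0. \<forall>n. \<forall>s\<in>{0..1}. \<forall>t\<in>{0..1}. \<bar>s - t\<bar> < \<delta> \<longrightarrow>
     \<bar>(\<integral>\<omega>. real (betti_n d q \<omega> t n) \<partial>P) / (2 * real n) ^ d - (\<integral>\<omega>. real (betti_n d q \<omega> s n) \<partial>P) / (2 * real n) ^ d\<bar> \<le> 12 ^ d * \<epsilon>"
proof -
  interpret prob_space P by (rule P(1))
  define F where "F = (\<lambda>Q t. measure P {\<omega> \<in> space P. \<omega> Q \<le> t})"
  define I where "I = (\<lambda>t n. (\<integral>\<omega>. real (betti_n d q \<omega> t n) \<partial>P))"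
  have TyK: "Ty d \<subseteq> K d" by (auto simp: Ty_def)
  have uc: "\<forall>Q\<in>Ty d. uniformly_continuous_on {0..1} (F Q)"
    using cont TyK unfolding F_def by (auto intro!: compact_uniformly_continuous)
  obtain \<delta> where d: "\<delta> > 0" "\<forall>Q\<in>Ty d. \<forall>s\<in>{0..1}. \<forall>t\<in>{0..1}. \<bar>s - t\<bar> < \<delta> \<longrightarrow> \<bar>F Q s - F Q t\<bar> < \<epsilon>"
    using unif_fin[OF Ty_fin uc e] by blast
  have key: "\<bar>I t n / (2 * real n) ^ d - I s n / (2 * real n) ^ d\<bar> \<le> 12 ^ d * \<epsilon>"
    if st: "s \<in> {0..1}" "t \<in> {0..1}" "s \<le> t" "t - s < \<delta>" for n s t
  proof (cases "n = 0")
    case True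
    have z: "(2 * real n) ^ d = 0" using q True by simp
    have "0 \<le> 12 ^ d * \<epsilon>" using e by simp
    then show ?thesis by (simp only: z division_ring_divide_zero diff_self abs_zero)
  next
    case False
    have meas: "measure P {\<omega> \<in> space P. s < \<omega> R \<and> \<omega> R \<le> t} \<le> \<epsilon>" if R: "R \<in> K d" for R
    proof -
      have eq: "{\<omega> \<in> space P. s < \<omega> R \<and> \<omega> R \<le> t} = {\<omega> \<in> space P. \<omega> R \<le> t} - {\<omega> \<in> space P. \<omega> R \<le> s}"
        by auto
      have "measure P {\<omega> \<in> space P. s < \<omega> R \<and> \<omega> R \<le> t} = F R t - F R s"
        unfolding eq F_def using st(3) le_sets[OF P(2) R]
        by (intro finite_measure_Diff) auto
      also have "\<dots> = F (R0 R) t - F (R0 R) s"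
        unfolding F_def using stat_eq[OF P(2,3) R] by simp
      also have "\<dots> < \<epsilon>"
      proof -
        have "\<bar>F (R0 R) t - F (R0 R) s\<bar> < \<epsilon>" using d(2) R0_Ty[OF R] st by auto
        then show ?thesis by simp
      qed
      finally show ?thesis by simp
    qed
    have fC: "finite (Cn d n)" using Cn_fin_card by blast
    have "\<bar>I t n - I s n\<bar> \<le> (\<Sum>Q\<in>Cn d n. \<Sum>R\<in>supc d Q. measure P {\<omega> \<in> space P. s < \<omega> R \<and> \<omega> R \<le> t})"
      unfolding I_def by (rule int_bound[OF P(1,2) st(3) q])
    also have "\<dots> \<le> (\<Sum>Q\<in>Cn d n. \<Sum>R\<in>supc d Q. \<epsilon>)"
      using meas by (intro sum_mono) (auto simp: supc_def)
    also have "\<dots> = (\<Sum>Q\<in>Cn d n. real (card (supc d Q)) * \<epsilon>)" by simp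
    also have "\<dots> \<le> (\<Sum>Q\<in>Cn d n. 4 ^ d * \<epsilon>)"
    proof (rule sum_mono)
      fix Q
      have "real (card (supc d Q)) \<le> 4 ^ d" using supc_fin_card[of d Q] by (metis of_nat_le_iff of_nat_numeral of_nat_power)
      then show "real (card (supc d Q)) * \<epsilon> \<le> 4 ^ d * \<epsilon>" using e by (simp add: mult_right_mono)
    qed
    also have "\<dots> = real (card (Cn d n)) * (4 ^ d * \<epsilon>)" by simp
    also have "\<dots> \<le> (2 * (2 * real n + 1)) ^ d * (4 ^ d * \<epsilon>)"
    proof -
      have "real (card (Cn d n)) \<le> real ((2 * (2 * n + 1)) ^ d)" using Cn_fin_card by (simp only: of_nat_le_iff)
      moreover have "real ((2 * (2 * n + 1)) ^ d) = (2 * (2 * real n + 1)) ^ d" by (simp add: add.commute)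
      ultimately have c1: "real (card (Cn d n)) \<le> (2 * (2 * real n + 1)) ^ d" by linarith
      show ?thesis by (rule mult_right_mono[OF c1]) (use e in simp)
    qed
    also have "\<dots> \<le> (3 * (2 * real n)) ^ d * (4 ^ d * \<epsilon>)"
    proof -
      have "(2 * (2 * real n + 1)) ^ d \<le> (3 * (2 * real n)) ^ d"
        using False by (intro power_mono) auto
      then show ?thesis by (rule mult_right_mono) (use e in simp)
    qed
    finally have b: "\<bar>I t n - I s n\<bar> \<le> (3 * (2 * real n)) ^ d * (4 ^ d * \<epsilon>)" .
    have pos: "(2 * real n) ^ d > 0" using False by simp
    have "\<bar>I t n / (2 * real n) ^ d - I s n / (2 * real n) ^ d\<bar> = \<bar>I t n - I s n\<bar> / (2 * real n) ^ d"
      using pos by (simp add: diff_divide_distrib[symmetric] abs_divide)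
    also have "\<dots> \<le> (3 * (2 * real n)) ^ d * (4 ^ d * \<epsilon>) / (2 * real n) ^ d"
      by (rule divide_right_mono[OF b]) (use pos in simp)
    also have "\<dots> = 12 ^ d * \<epsilon>"
    proof -
      define a where "a = (2 * real n) ^ d"
      have a0: "a \<noteq> 0" using pos unfolding a_def by linarith
      have "(3 * (2 * real n)) ^ d = 3 ^ d * a" unfolding a_def by (rule power_mult_distrib)
      moreover have "(3::real) ^ d * 4 ^ d = 12 ^ d" by (simp flip: power_mult_distrib)
      ultimately show ?thesis using a0 unfolding a_def[symmetric] by (simp add: field_simps)
    qed
    finally show ?thesis .
  qed
  show ?thesis
  proof (intro exI[of _ \<delta>] conjI allI ballI impI)
    show "\<delta> > 0" by (rule d(1))
  next
    fix n s t assume st: "s \<in> {0..1::real}" "t \<in> {0..1::real}" "\<bar>s - t\<bar> < \<delta>"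
    show "\<bar>(\<integral>\<omega>. real (betti_n d q \<omega> t n) \<partial>P) / (2 * real n) ^ d - (\<integral>\<omega>. real (betti_n d q \<omega> s n) \<partial>P) / (2 * real n) ^ d\<bar> \<le> 12 ^ d * \<epsilon>"
    proof (cases "s \<le> t")
      case True
      then show ?thesis using key[of s t n] st unfolding I_def by auto
    next
      case False
      then show ?thesis using key[of t s n] st unfolding I_def by (auto simp: abs_minus_commute)
    qed
  qed
qed

lemma betti_div_bound:
  assumes "0 < d"
  shows "\<bar>real (betti_n d q \<omega> t n) / (2 * real n) ^ d\<bar> \<le> 3 ^ d"
proof (cases "n = 0")
  case True
  have z: "(2 * real n) ^ d = 0" using True assms by simp
  show ?thesis by (simp only: z division_ring_divide_zero abs_zero) simp
next
  case False
  have pos: "(2 * real n) ^ d > 0" using False by simp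
  have "real (betti_n d q \<omega> t n) \<le> real ((2 * (2 * n + 1)) ^ d)" using betti_n_le by (simp only: of_nat_le_iff)
  also have "\<dots> = (2 * (2 * real n + 1)) ^ d" by (simp add: add.commute)
  also have "\<dots> \<le> (3 * (2 * real n)) ^ d" using False by (intro power_mono) auto
  also have "\<dots> = 3 ^ d * (2 * real n) ^ d" by (rule power_mult_distrib)
  finally have "real (betti_n d q \<omega> t n) / (2 * real n) ^ d \<le> 3 ^ d"
    using pos by (simp add: divide_le_eq)
  moreover have "0 \<le> real (betti_n d q \<omega> t n) / (2 * real n) ^ d" using pos by simp
  ultimately show ?thesis by simp
qed

theorem lemma3p3:
  fixes d q :: nat and P :: "(cube \<Rightarrow> real) measure" and bhat :: "real \<Rightarrow> real"
  assumes "prob_space P"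
    and "sets P = sets (Omega d)"
    and "stationary d P"
    and "ergodic d P"
    and "q < d"
    and "\<forall>t\<in>{0..1}. AE \<omega> in P.
           (\<lambda>n. real (betti_n d q \<omega> t n) / (2 * real n) ^ d) \<longlonglongrightarrow> bhat t"
    and "\<forall>Q\<in>K d. continuous_on {0..1} (\<lambda>t. measure P {\<omega> \<in> space P. \<omega> Q \<le> t})"
  shows "uniform_limit {0..1}
           (\<lambda>n t. (\<integral>\<omega>. real (betti_n d q \<omega> t n) \<partial>P) / (2 * real n) ^ d)
           bhat sequentially"
proof -
  interpret prob_space P by (rule assms(1))
  define f where "f = (\<lambda>n t. (\<integral>\<omega>. real (betti_n d q \<omega> t n) \<partial>P) / (2 * real n) ^ d)"
  have pt: "(\<lambda>n. f n t) \<longlonglongrightarrow> bhat t" if t: "t \<in> {0..1}" for t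
  proof -
    have "(\<lambda>i. \<integral>\<omega>. real (betti_n d q \<omega> t i) / (2 * real i) ^ d \<partial>P) \<longlonglongrightarrow> (\<integral>\<omega>. bhat t \<partial>P)"
    proof (rule integral_dominated_convergence[where w = "\<lambda>_. 3 ^ d"])
      show "(\<lambda>_. bhat t) \<in> borel_measurable P" by simp
      show "(\<lambda>\<omega>. real (betti_n d q \<omega> t i) / (2 * real i) ^ d) \<in> borel_measurable P" for i
        by (rule borel_measurable_divide[OF betti_meas[OF assms(2)]]) simp
      show "integrable P (\<lambda>_. 3 ^ d :: real)" by simp
      show "AE \<omega> in P. (\<lambda>i. real (betti_n d q \<omega> t i) / (2 * real i) ^ d) \<longlonglongrightarrow> bhat t"
        using assms(6) t by blast
      show "AE \<omega> in P. norm (real (betti_n d q \<omega> t i) / (2 * real i) ^ d) \<le> 3 ^ d" for i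
        using betti_div_bound[of d q _ t i] assms(5) by simp
    qed
    then show ?thesis by (simp add: f_def prob_space)
  qed
  show ?thesis
    unfolding f_def[symmetric] uniform_limit_iff
  proof (intro allI impI)
    fix e :: real assume e: "e > 0"
    define \<epsilon> where "\<epsilon> = e / (4 * 12 ^ d)"
    have \<epsilon>: "\<epsilon> > 0" using e by (simp add: \<epsilon>_def)
    have e4: "12 ^ d * \<epsilon> = e / 4" by (simp add: \<epsilon>_def)
    obtain \<delta> where d: "\<delta> > 0" "\<forall>n. \<forall>s\<in>{0..1}. \<forall>t\<in>{0..1}. \<bar>s - t\<bar> < \<delta> \<longrightarrow> \<bar>f n t - f n s\<bar> \<le> e / 4"
      using equi[OF assms(1,2,3,5,7) \<epsilon>] unfolding f_def e4 by blast
    have bh: "\<bar>bhat t - bhat s\<bar> \<le> e / 4" if st: "s \<in> {0..1}" "t \<in> {0..1}" "\<bar>s - t\<bar> < \<delta>" for s t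
    proof (rule tendsto_upperbound)
      show "(\<lambda>n. \<bar>f n t - f n s\<bar>) \<longlonglongrightarrow> \<bar>bhat t - bhat s\<bar>"
        by (intro tendsto_intros pt st)
      show "\<forall>\<^sub>F n in sequentially. \<bar>f n t - f n s\<bar> \<le> e / 4" using d st by auto
    qed simp
    obtain m where m: "inverse (real (Suc m)) < \<delta>" using reals_Archimedean[OF d(1)] by auto
    define K where "K = Suc m"
    have K: "K > 0" "1 / real K < \<delta>" using m by (auto simp: K_def field_simps)
    define G where "G = (\<lambda>k. real k / real K) ` {..K}"
    have fG: "finite G" by (simp add: G_def)
    have G01: "G \<subseteq> {0..1}" using K by (auto simp: G_def field_simps)
    have "\<forall>\<^sub>F n in sequentially. \<forall>g\<in>G. dist (f n g) (bhat g) < e / 3"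
    proof (rule eventually_ball_finite[OF fG], intro ballI)
      fix g assume "g \<in> G"
      then have "(\<lambda>n. f n g) \<longlonglongrightarrow> bhat g" using pt G01 by blast
      moreover have "e / 3 > 0" using e by simp
      ultimately show "\<forall>\<^sub>F n in sequentially. dist (f n g) (bhat g) < e / 3"
        unfolding tendsto_iff by blast
    qed
    then show "\<forall>\<^sub>F n in sequentially. \<forall>t\<in>{0..1}. dist (f n t) (bhat t) < e"
    proof (rule eventually_mono)
      fix n assume n: "\<forall>g\<in>G. dist (f n g) (bhat g) < e / 3"
      show "\<forall>t\<in>{0..1}. dist (f n t) (bhat t) < e"
      proof
        fix t :: real assume t: "t \<in> {0..1}"
        define k where "k = nat \<lfloor>t * real K\<rfloor>"
        have tK: "0 \<le> t * real K" "t * real K \<le> real K" using t K by auto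
        have kf: "real k = of_int \<lfloor>t * real K\<rfloor>" using tK by (simp add: k_def)
        have k1: "real k \<le> t * real K" "t * real K < real k + 1" using kf by linarith+
        have kK: "k \<le> K"
        proof -
          have "real k \<le> real K" using k1 tK by linarith
          then show ?thesis by simp
        qed
        define g where "g = real k / real K"
        have gG: "g \<in> G" using kK by (auto simp: G_def g_def)
        have g01: "g \<in> {0..1}" using gG G01 by blast
        have "g \<le> t" "t < g + 1 / real K" using k1 K by (auto simp: g_def field_simps)
        then have gt: "\<bar>g - t\<bar> < \<delta>" using K by linarith
        have a1: "\<bar>f n t - f n g\<bar> \<le> e / 4" using d(2) g01 t gt by blast
        have a2: "\<bar>f n g - bhat g\<bar> < e / 3" using n gG by (simp add: dist_real_def)
        have a3: "\<bar>bhat g - bhat t\<bar> \<le> e / 4" using bh[OF t g01] gt by (simp add: abs_minus_commute)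
        have "\<bar>f n t - bhat t\<bar> \<le> \<bar>f n t - f n g\<bar> + \<bar>f n g - bhat g\<bar> + \<bar>bhat g - bhat t\<bar>" by linarith
        then show "dist (f n t) (bhat t) < e" using a1 a2 a3 e by (simp add: dist_real_def)
      qed
    qed
  qed
qed

end
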